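(* For all $p,q\in\mathcal{P}$, the germs $pq$ and $p/q$ both belong to $\mathcal{P}$.
   Context: All functions are real-valued functions defined on some interval $(a,\infty)$. Two such functions are identified if they agree for all sufficiently large $x$; these equivalence classes are germs at $+\infty$. Write $\ln^{(k)}$ for the $k$-fold iterated natural logarithm, with $\ln^{(0)}(x)=x$. Let $\mathcal{H}$ be the smallest set of germs at $+\infty$ satisfying: (i) $\ln^{(k)}\in\mathcal{H}$ for every integer $k\ge0$; (ii) if $f\in\mathcal{H}$, then $\exp\circ f\in\mathcal{H}$, and if moreover $f$ is eventually positive, then $f^\alpha\in\mathcal{H}$ for every real $\alpha>0$; (iii) if $f,g\in\mathcal{H}$ and $f\ne g$ (as germs), then $fg\in\mathcal{H}$; (iv) if $f,g\in\mathcal{H}$ and $f(x)/g(x)\to+\infty$, then $f/g\in\mathcal{H}$. Let $\mathcal{P}=\mathcal{H}\cup\{1\}\cup\{1/f:f\in\mathcal{H}\}$, where $1$ is the constant germ. *)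

theory Defs
  imports Complex_Main
begin

text \<open>Germs at +infinity are represented by functions real => real; a set of germs
is represented by the set of all its representatives, i.e. a set of functions closed
under eventual equality at_top (rule germ_eq below).\<close>

inductive_set Hset :: "(real \<Rightarrow> real) set" where
  iter_ln: "(ln ^^ k) \<in> Hset"
| exp_comp: "f \<in> Hset \<Longrightarrow> (\<lambda>x. exp (f x)) \<in> Hset"
| power: "f \<in> Hset \<Longrightarrow> eventually (\<lambda>x. f x > 0) at_top \<Longrightarrow> (\<alpha>::real) > 0
           \<Longrightarrow> (\<lambda>x. f x powr \<alpha>) \<in> Hset"
| times: "f \<in> Hset \<Longrightarrow> g \<in> Hset \<Longrightarrow> \<not> eventually (\<lambda>x. f x = g x) at_top
           \<Longrightarrow> (\<lambda>x. f x * g x) \<in> Hset"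
| quot: "f \<in> Hset \<Longrightarrow> g \<in> Hset \<Longrightarrow> filterlim (\<lambda>x. f x / g x) at_top at_top
           \<Longrightarrow> (\<lambda>x. f x / g x) \<in> Hset"
| germ_eq: "f \<in> Hset \<Longrightarrow> eventually (\<lambda>x. f x = g x) at_top \<Longrightarrow> g \<in> Hset"

definition Pset :: "(real \<Rightarrow> real) set" where
  "Pset = {p. p \<in> Hset \<or> eventually (\<lambda>x. p x = 1) at_top
              \<or> (\<exists>f \<in> Hset. eventually (\<lambda>x. p x = 1 / f x) at_top)}"

end

theory Submission
  imports Defs "HOL-Real_Asymp.Real_Asymp"
begin

fun lc :: "(real \<times> (real \<Rightarrow> real)) list \<Rightarrow> real \<Rightarrow> real" where
  "lc [] x = 0"
| "lc (ch # L) x = fst ch * snd ch x + lc L x"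

lemma lc_append: "lc (L1 @ L2) x = lc L1 x + lc L2 x"
  by (induction L1) auto

definition sc :: "real \<Rightarrow> (real \<times> (real \<Rightarrow> real)) list \<Rightarrow> (real \<times> (real \<Rightarrow> real)) list" where
  "sc a L = map (\<lambda>ch. (a * fst ch, snd ch)) L"

lemma lc_sc: "lc (sc a L) x = a * lc L x"
  by (induction L) (auto simp: sc_def algebra_simps)

lemma snd_sc: "snd ` set (sc a L) = snd ` set L"
  by (auto simp: sc_def image_image)

lemma lc_filter: "lc L x = lc (filter P L) x + lc (filter (\<lambda>ch. \<not> P ch) L) x"
  by (induction L) auto

lemma fl_cong:
  fixes f g :: "real \<Rightarrow> real"
  assumes "filterlim f F at_top" "eventually (\<lambda>x. f x = g x) at_top"
  shows "filterlim g F at_top"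
proof -
  have "filterlim f F at_top = filterlim g F at_top"
    by (rule filterlim_cong) (use assms in auto)
  then show ?thesis using assms by simp
qed

lemma ev_comp: "filterlim f F G \<Longrightarrow> eventually P F \<Longrightarrow> eventually (\<lambda>x. P (f x)) G"
  using filterlim_iff by blast

lemma iter_ln_inf: "filterlim (ln ^^ k) at_top (at_top::real filter)"
proof (induction k)
  case 0
  then show ?case by (simp add: filterlim_ident)
next
  case (Suc k)
  have "filterlim (\<lambda>x. ln ((ln ^^ k) x)) at_top (at_top::real filter)"
    by (rule filterlim_compose[OF ln_at_top Suc.IH])
  then show ?case by (simp add: o_def)
qed

fun A :: "nat \<Rightarrow> (real \<Rightarrow> real) set" where
  "A 0 = {f. \<exists>k. eventually (\<lambda>x. f x = (ln ^^ k) x) at_top}"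
| "A (Suc n) = A n \<union> {f. filterlim f at_top at_top \<and>
      (\<exists>L. snd ` set L \<subseteq> A n \<and> eventually (\<lambda>x. f x = exp (lc L x)) at_top)}"

lemma A_mono: "m \<le> n \<Longrightarrow> A m \<subseteq> A n"
  by (rule lift_Suc_mono_le[of A]) auto

lemma A_cong: "f \<in> A n \<Longrightarrow> eventually (\<lambda>x. f x = g x) at_top \<Longrightarrow> g \<in> A n"
proof (induction n arbitrary: f g)
  case 0
  then obtain k where "eventually (\<lambda>x. f x = (ln ^^ k) x) at_top" by auto
  with 0(2) have "eventually (\<lambda>x. g x = (ln ^^ k) x) at_top"
    by eventually_elim simp
  then show ?case by auto
next
  case (Suc n)
  show ?case
  proof (cases "f \<in> A n")
    case True
    then show ?thesis using Suc by auto
  next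
    case False
    then obtain L where L: "filterlim f at_top at_top" "snd ` set L \<subseteq> A n"
      "eventually (\<lambda>x. f x = exp (lc L x)) at_top" using Suc.prems by auto
    have "filterlim g at_top at_top" using fl_cong[OF L(1) Suc.prems(2)] .
    moreover have "eventually (\<lambda>x. g x = exp (lc L x)) at_top"
      using L(3) Suc.prems(2) by eventually_elim simp
    ultimately show ?thesis using L(2) by auto
  qed
qed

lemma A_inf: "f \<in> A n \<Longrightarrow> filterlim f at_top at_top"
proof (induction n)
  case 0
  then obtain k where "eventually (\<lambda>x. f x = (ln ^^ k) x) at_top" by auto
  then have "eventually (\<lambda>x. (ln ^^ k) x = f x) at_top" by eventually_elim simp
  then show ?case using fl_cong[OF iter_ln_inf] by blast
next
  case (Suc n)
  then show ?case by auto
qed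

lemma fl_pos: "filterlim f at_top at_top \<Longrightarrow> eventually (\<lambda>x. f x > (0::real)) at_top"
  using filterlim_at_top_dense by blast

lemma A_pos: "f \<in> A n \<Longrightarrow> eventually (\<lambda>x. f x > 0) at_top"
  using A_inf fl_pos by blast

lemma A_ln: "f \<in> A n \<Longrightarrow> \<exists>L. snd ` set L \<subseteq> A n \<and> eventually (\<lambda>x. ln (f x) = lc L x) at_top"
proof (induction n arbitrary: f)
  case 0
  then obtain k where k: "eventually (\<lambda>x. f x = (ln ^^ k) x) at_top" by auto
  have "(ln ^^ Suc k) \<in> A 0" by (auto intro!: exI[of _ "Suc k"])
  moreover have "eventually (\<lambda>x. ln (f x) = lc [(1, ln ^^ Suc k)] x) at_top"
    using k by eventually_elim simp
  ultimately show ?case by (intro exI[of _ "[(1, ln ^^ Suc k)]"]) auto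
next
  case (Suc n)
  show ?case
  proof (cases "f \<in> A n")
    case True
    then obtain L where "snd ` set L \<subseteq> A n" "eventually (\<lambda>x. ln (f x) = lc L x) at_top"
      using Suc.IH by blast
    then show ?thesis using A_mono[of n "Suc n"] by (intro exI[of _ L]) auto
  next
    case False
    then obtain L where L: "snd ` set L \<subseteq> A n"
      "eventually (\<lambda>x. f x = exp (lc L x)) at_top" using Suc.prems by auto
    have "eventually (\<lambda>x. ln (f x) = lc L x) at_top" using L(2) by eventually_elim simp
    then show ?thesis using L(1) A_mono[of n "Suc n"] by (intro exI[of _ L]) auto
  qed
qed

lemma A_Suc_ln: "f \<in> A (Suc n) \<Longrightarrow> \<exists>L. snd ` set L \<subseteq> A n \<and> eventually (\<lambda>x. ln (f x) = lc L x) at_top"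
proof (cases "f \<in> A n")
  case True
  then show ?thesis using A_ln by blast
next
  case False
  assume "f \<in> A (Suc n)"
  with False obtain L where L: "snd ` set L \<subseteq> A n"
    "eventually (\<lambda>x. f x = exp (lc L x)) at_top" by auto
  have "eventually (\<lambda>x. ln (f x) = lc L x) at_top" using L(2) by eventually_elim simp
  then show ?thesis using L(1) by blast
qed

lemma A_new:
  assumes "snd ` set L \<subseteq> A n" "filterlim f at_top at_top"
    "eventually (\<lambda>x. ln (f x) = lc L x) at_top"
  shows "f \<in> A (Suc n)"
proof -
  have "eventually (\<lambda>x. f x = exp (lc L x)) at_top"
    using assms(3) fl_pos[OF assms(2)] by eventually_elim (metis exp_ln)
  then show ?thesis using assms by auto
qed

lemma H_in_A: "f \<in> Hset \<Longrightarrow> \<exists>n. f \<in> A n"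
proof (induction rule: Hset.induct)
  case (iter_ln k)
  then show ?case by (intro exI[of _ 0]) (auto intro!: exI[of _ k])
next
  case (exp_comp f)
  then obtain n where n: "f \<in> A n" by blast
  have "filterlim (\<lambda>x. exp (f x)) at_top at_top"
    using filterlim_compose[OF exp_at_top A_inf[OF n]] .
  moreover have "eventually (\<lambda>x. ln (exp (f x)) = lc [(1, f)] x) at_top" by simp
  ultimately have "(\<lambda>x. exp (f x)) \<in> A (Suc n)" using n by (intro A_new[of "[(1, f)]"]) auto
  then show ?case by blast
next
  case (power f \<alpha>)
  then obtain n where n: "f \<in> A n" by blast
  obtain L where L: "snd ` set L \<subseteq> A n" "eventually (\<lambda>x. ln (f x) = lc L x) at_top"
    using A_ln[OF n] by blast
  have pos: "eventually (\<lambda>x. f x > 0) at_top" using A_pos[OF n] .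
  have "filterlim (\<lambda>x. \<alpha> * ln (f x)) at_top at_top"
    by (rule filterlim_tendsto_pos_mult_at_top[OF tendsto_const \<open>\<alpha> > 0\<close>
          filterlim_compose[OF ln_at_top A_inf[OF n]]])
  then have "filterlim (\<lambda>x. exp (\<alpha> * ln (f x))) at_top at_top"
    using filterlim_compose[OF exp_at_top] by blast
  moreover have "eventually (\<lambda>x. exp (\<alpha> * ln (f x)) = f x powr \<alpha>) at_top"
    using pos by eventually_elim (simp add: powr_def)
  ultimately have fl: "filterlim (\<lambda>x. f x powr \<alpha>) at_top at_top" by (rule fl_cong)
  have "eventually (\<lambda>x. ln (f x powr \<alpha>) = lc (sc \<alpha> L) x) at_top"
    using L(2) by eventually_elim (simp add: lc_sc ln_powr)
  then have "(\<lambda>x. f x powr \<alpha>) \<in> A (Suc n)" using L(1) fl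
    by (intro A_new[of "sc \<alpha> L"]) (auto simp: snd_sc)
  then show ?case by blast
next
  case (times f g)
  then obtain n1 n2 where n: "f \<in> A n1" "g \<in> A n2" by blast
  define m where "m = max n1 n2"
  have nm: "f \<in> A m" "g \<in> A m" using n A_mono[of n1 m] A_mono[of n2 m] by (auto simp: m_def)
  obtain L1 where L1: "snd ` set L1 \<subseteq> A m" "eventually (\<lambda>x. ln (f x) = lc L1 x) at_top"
    using A_ln[OF nm(1)] by blast
  obtain L2 where L2: "snd ` set L2 \<subseteq> A m" "eventually (\<lambda>x. ln (g x) = lc L2 x) at_top"
    using A_ln[OF nm(2)] by blast
  have "eventually (\<lambda>x. ln (f x * g x) = lc (L1 @ L2) x) at_top"
    using L1(2) L2(2) A_pos[OF nm(1)] A_pos[OF nm(2)]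
    by eventually_elim (simp add: lc_append ln_mult_pos)
  moreover have "filterlim (\<lambda>x. f x * g x) at_top at_top"
    using filterlim_at_top_mult_at_top[OF A_inf[OF nm(1)] A_inf[OF nm(2)]] .
  ultimately have "(\<lambda>x. f x * g x) \<in> A (Suc m)" using L1(1) L2(1)
    by (intro A_new[of "L1 @ L2"]) auto
  then show ?case by blast
next
  case (quot f g)
  then obtain n1 n2 where n: "f \<in> A n1" "g \<in> A n2" by blast
  define m where "m = max n1 n2"
  have nm: "f \<in> A m" "g \<in> A m" using n A_mono[of n1 m] A_mono[of n2 m] by (auto simp: m_def)
  obtain L1 where L1: "snd ` set L1 \<subseteq> A m" "eventually (\<lambda>x. ln (f x) = lc L1 x) at_top"
    using A_ln[OF nm(1)] by blast
  obtain L2 where L2: "snd ` set L2 \<subseteq> A m" "eventually (\<lambda>x. ln (g x) = lc L2 x) at_top"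
    using A_ln[OF nm(2)] by blast
  have "eventually (\<lambda>x. ln (f x / g x) = lc (L1 @ sc (-1) L2) x) at_top"
    using L1(2) L2(2) A_pos[OF nm(1)] A_pos[OF nm(2)]
    by eventually_elim (simp add: lc_append lc_sc ln_divide_pos)
  then have "(\<lambda>x. f x / g x) \<in> A (Suc m)" using L1(1) L2(1) quot.hyps(3)
    by (intro A_new[of "L1 @ sc (-1) L2"]) (simp_all add: snd_sc image_Un)
  then show ?case by blast
next
  case (germ_eq f g)
  then show ?case using A_cong by blast
qed


definition cmp :: "(real \<Rightarrow> real) \<Rightarrow> (real \<Rightarrow> real) \<Rightarrow> bool" where
  "cmp f g \<longleftrightarrow> eventually (\<lambda>x. f x = g x) at_top \<or> filterlim (\<lambda>x. f x / g x) at_top at_top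
     \<or> filterlim (\<lambda>x. g x / f x) at_top at_top"

definition dle :: "(real \<Rightarrow> real) \<Rightarrow> (real \<Rightarrow> real) \<Rightarrow> bool" where
  "dle h h0 \<longleftrightarrow> eventually (\<lambda>x. h x = h0 x) at_top \<or> filterlim (\<lambda>x. h0 x / h x) at_top at_top"

lemma dle_refl: "dle h h"
  by (simp add: dle_def)

lemma dle_trans:
  assumes inf: "filterlim h0 at_top at_top" and a: "dle h h0" and b: "dle h0 h1"
  shows "dle h h1"
proof -
  have pos: "eventually (\<lambda>x. h0 x > 0) at_top" using fl_pos[OF inf] .
  consider (e1) "eventually (\<lambda>x. h x = h0 x) at_top" | (l1) "filterlim (\<lambda>x. h0 x / h x) at_top at_top"
    using a unfolding dle_def by blast
  then show ?thesis
  proof cases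
    case e1
    consider (e2) "eventually (\<lambda>x. h0 x = h1 x) at_top" | (l2) "filterlim (\<lambda>x. h1 x / h0 x) at_top at_top"
      using b unfolding dle_def by blast
    then show ?thesis
    proof cases
      case e2
      have "eventually (\<lambda>x. h x = h1 x) at_top" using e1 e2 by eventually_elim simp
      then show ?thesis unfolding dle_def by (rule disjI1)
    next
      case l2
      have "eventually (\<lambda>x. h1 x / h0 x = h1 x / h x) at_top" using e1 by eventually_elim simp
      from fl_cong[OF l2 this] show ?thesis unfolding dle_def by (rule disjI2)
    qed
  next
    case l1
    consider (e2) "eventually (\<lambda>x. h0 x = h1 x) at_top" | (l2) "filterlim (\<lambda>x. h1 x / h0 x) at_top at_top"
      using b unfolding dle_def by blast
    then show ?thesis
    proof cases
      case e2
      have "eventually (\<lambda>x. h0 x / h x = h1 x / h x) at_top" using e2 by eventually_elim simp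
      from fl_cong[OF l1 this] show ?thesis unfolding dle_def by (rule disjI2)
    next
      case l2
      have "filterlim (\<lambda>x. h1 x / h0 x * (h0 x / h x)) at_top at_top"
        by (rule filterlim_at_top_mult_at_top[OF l2 l1])
      moreover have "eventually (\<lambda>x. h1 x / h0 x * (h0 x / h x) = h1 x / h x) at_top"
        using pos by eventually_elim simp
      ultimately have "filterlim (\<lambda>x. h1 x / h x) at_top at_top" by (rule fl_cong)
      then show ?thesis unfolding dle_def by (rule disjI2)
    qed
  qed
qed

lemma dle_total: "cmp h h0 \<Longrightarrow> dle h h0 \<or> dle h0 h"
  unfolding cmp_def dle_def by blast

lemma max_ex:
  assumes inf: "\<forall>h\<in>T. filterlim h at_top at_top" and cm: "\<forall>f\<in>T. \<forall>g\<in>T. cmp f g"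
  shows "xs \<noteq> [] \<Longrightarrow> set xs \<subseteq> T \<Longrightarrow> \<exists>h0\<in>set xs. \<forall>h\<in>set xs. dle h h0"
proof (induction xs)
  case Nil
  then show ?case by simp
next
  case (Cons a xs)
  show ?case
  proof (cases "xs = []")
    case True
    then show ?thesis by (simp add: dle_refl)
  next
    case False
    then obtain h0 where h0: "h0 \<in> set xs" "\<forall>h\<in>set xs. dle h h0" using Cons by auto
    have h0T: "h0 \<in> T" "a \<in> T" using h0(1) Cons.prems by auto
    have "cmp a h0" using cm h0T by blast
    then consider "dle a h0" | "dle h0 a" using dle_total by blast
    then show ?thesis
    proof cases
      case 1
      then show ?thesis using h0 by auto
    next
      case 2
      have h0inf: "filterlim h0 at_top at_top" using inf h0T by blast
      have "\<forall>h\<in>set xs. dle h a"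
      proof
        fix h assume "h \<in> set xs"
        then have "dle h h0" using h0(2) by blast
        then show "dle h a" using dle_trans[OF h0inf _ 2] by blast
      qed
      then show ?thesis by (auto simp: dle_refl)
    qed
  qed
qed

lemma lc_eq: "\<forall>ch\<in>set L. eventually (\<lambda>x. snd ch x = g x) at_top \<Longrightarrow>
    eventually (\<lambda>x. lc L x = sum_list (map fst L) * g x) at_top"
proof (induction L)
  case Nil
  then show ?case by simp
next
  case (Cons ch L)
  then have "eventually (\<lambda>x. snd ch x = g x) at_top"
    "eventually (\<lambda>x. lc L x = sum_list (map fst L) * g x) at_top" by auto
  then show ?case by eventually_elim (simp add: algebra_simps)
qed

lemma lc_small: "\<forall>ch\<in>set L. ((\<lambda>x. snd ch x / g x) \<longlongrightarrow> 0) at_top \<Longrightarrow>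
    ((\<lambda>x. lc L x / g x) \<longlongrightarrow> 0) at_top"
proof (induction L)
  case Nil
  then show ?case by simp
next
  case (Cons ch L)
  then have a: "((\<lambda>x. snd ch x / g x) \<longlongrightarrow> 0) at_top" and b: "((\<lambda>x. lc L x / g x) \<longlongrightarrow> 0) at_top"
    by auto
  have "((\<lambda>x. fst ch * (snd ch x / g x) + lc L x / g x) \<longlongrightarrow> fst ch * 0 + 0) at_top"
    by (intro tendsto_intros a b)
  then show ?case by (simp add: add_divide_distrib)
qed

lemma dom:
  assumes inf: "\<forall>h\<in>T. filterlim h at_top at_top" and cm: "\<forall>f\<in>T. \<forall>g\<in>T. cmp f g"
  shows "snd ` set L \<subseteq> T \<Longrightarrow> eventually (\<lambda>x. lc L x = 0) at_top \<or>
     filterlim (lc L) at_top at_top \<or> filterlim (lc L) at_bot at_top"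
proof (induction "length L" arbitrary: L rule: less_induct)
  case less
  show ?case
  proof (cases "L = []")
    case True
    then show ?thesis by simp
  next
    case False
    obtain h0 where h0: "h0 \<in> set (map snd L)" "\<forall>h\<in>set (map snd L). dle h h0"
      using max_ex[OF inf cm, of "map snd L"] False less.prems by auto
    have h0T: "h0 \<in> T" using h0 less.prems by auto
    have h0inf: "filterlim h0 at_top at_top" using inf h0T by auto
    have h0pos: "eventually (\<lambda>x. h0 x > 0) at_top" using fl_pos[OF h0inf] .
    define P where "P = (\<lambda>ch::real \<times> (real \<Rightarrow> real). eventually (\<lambda>x. snd ch x = h0 x) at_top)"
    define L1 where "L1 = filter P L"
    define L2 where "L2 = filter (\<lambda>ch. \<not> P ch) L"
    have split: "\<And>x. lc L x = lc L1 x + lc L2 x" unfolding L1_def L2_def by (rule lc_filter)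
    obtain ch0 where ch0: "ch0 \<in> set L" "snd ch0 = h0" using h0 by auto
    have "P ch0" using ch0 by (simp add: P_def)
    then have len: "length L2 < length L" unfolding L2_def
      using length_filter_less[OF ch0(1), of "\<lambda>ch. \<not> P ch"] by simp
    have L2T: "snd ` set L2 \<subseteq> T" using less.prems by (auto simp: L2_def)
    define C where "C = sum_list (map fst L1)"
    have e1: "eventually (\<lambda>x. lc L1 x = C * h0 x) at_top"
      unfolding C_def by (rule lc_eq) (auto simp: L1_def P_def)
    show ?thesis
    proof (cases "C = 0")
      case True
      have e: "eventually (\<lambda>x. lc L2 x = lc L x) at_top" using e1
        by eventually_elim (simp add: split True)
      have "eventually (\<lambda>x. lc L2 x = 0) at_top \<or> filterlim (lc L2) at_top at_top \<or>
          filterlim (lc L2) at_bot at_top" using less.hyps[OF len L2T] .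
      moreover have "eventually (\<lambda>x. lc L2 x = 0) at_top \<Longrightarrow> eventually (\<lambda>x. lc L x = 0) at_top"
        using e by (auto elim: eventually_elim2)
      ultimately show ?thesis
      proof (elim disjE)
        assume "filterlim (lc L2) at_top at_top"
        then show ?thesis using fl_cong[OF _ e] by blast
      next
        assume "filterlim (lc L2) at_bot at_top"
        then show ?thesis using fl_cong[OF _ e] by blast
      qed simp
    next
      case False
      have small: "((\<lambda>x. lc L2 x / h0 x) \<longlongrightarrow> 0) at_top"
      proof (rule lc_small, intro ballI)
        fix ch assume ch: "ch \<in> set L2"
        then have "\<not> P ch" "ch \<in> set L" by (auto simp: L2_def)
        then have "filterlim (\<lambda>x. h0 x / snd ch x) at_top at_top"
          using h0(2) by (auto simp: dle_def P_def)
        then have "((\<lambda>x. inverse (h0 x / snd ch x)) \<longlongrightarrow> 0) at_top"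
          by (rule tendsto_inverse_0_at_top)
        then show "((\<lambda>x. snd ch x / h0 x) \<longlongrightarrow> 0) at_top" by simp
      qed
      have "((\<lambda>x. C + lc L2 x / h0 x) \<longlongrightarrow> C + 0) at_top"
        by (intro tendsto_intros small)
      moreover have "eventually (\<lambda>x. C + lc L2 x / h0 x = lc L x / h0 x) at_top"
        using e1 h0pos by eventually_elim (simp add: split add_divide_distrib)
      ultimately have lim: "((\<lambda>x. lc L x / h0 x) \<longlongrightarrow> C) at_top"
        using tendsto_cong[of "\<lambda>x. C + lc L2 x / h0 x" "\<lambda>x. lc L x / h0 x" at_top C] by simp
      have e2: "eventually (\<lambda>x. lc L x / h0 x * h0 x = lc L x) at_top"
        using h0pos by eventually_elim simp
      show ?thesis
      proof (cases "C > 0")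
        case True
        have "filterlim (\<lambda>x. lc L x / h0 x * h0 x) at_top at_top"
          by (rule filterlim_tendsto_pos_mult_at_top[OF lim True h0inf])
        then show ?thesis using fl_cong[OF _ e2] by blast
      next
        case False
        with \<open>C \<noteq> 0\<close> have "C < 0" by simp
        have "filterlim (\<lambda>x. lc L x / h0 x * h0 x) at_bot at_top"
          by (rule filterlim_tendsto_neg_mult_at_bot[OF lim \<open>C < 0\<close> h0inf])
        then show ?thesis using fl_cong[OF _ e2] by blast
      qed
    qed
  qed
qed


lemma iter_le: "eventually (\<lambda>z. 0 < (ln ^^ m) z \<and> (ln ^^ m) z \<le> (z::real)) at_top"
proof (induction m)
  case 0
  then show ?case using eventually_gt_at_top[of 0] by eventually_elim simp
next
  case (Suc m)
  have "eventually (\<lambda>z. 0 < (ln ^^ m) (ln z) \<and> (ln ^^ m) (ln z) \<le> ln (z::real)) at_top"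
    by (rule ev_comp[OF ln_at_top Suc.IH])
  then show ?case using eventually_gt_at_top[of 0]
  proof eventually_elim
    case (elim z)
    have "ln z < z" using elim(2) ln_less_self by blast
    then show ?case unfolding funpow_Suc_right o_apply using elim(1) by linarith
  qed
qed

lemma z_ratio: "0 < m \<Longrightarrow> filterlim (\<lambda>z. z / (ln ^^ m) z) at_top (at_top::real filter)"
proof -
  assume "0 < m"
  then obtain m' where m: "m = Suc m'" by (cases m) auto
  have ev: "eventually (\<lambda>z. 0 < (ln ^^ m') (ln z) \<and> (ln ^^ m') (ln z) \<le> ln (z::real)) at_top"
    by (rule ev_comp[OF ln_at_top iter_le])
  have lim: "filterlim (\<lambda>z::real. z / ln z) at_top at_top" by real_asymp
  have "eventually (\<lambda>z::real. z / ln z \<le> z / (ln ^^ m) z) at_top"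
    using ev eventually_gt_at_top[of "0::real"]
  proof eventually_elim
    case (elim z)
    have lz: "0 < ln z" using elim by linarith
    show ?case unfolding m funpow_Suc_right o_apply
      by (intro divide_left_mono) (use elim lz in \<open>auto intro!: mult_pos_pos\<close>)
  qed
  then show ?thesis by (rule filterlim_at_top_mono[OF lim])
qed

lemma iter_ratio: "i < j \<Longrightarrow> filterlim (\<lambda>x. (ln ^^ i) x / (ln ^^ j) x) at_top (at_top::real filter)"
proof -
  assume ij: "i < j"
  have "filterlim (\<lambda>x. (ln ^^ i) x / (ln ^^ (j - i)) ((ln ^^ i) x)) at_top (at_top::real filter)"
    by (rule filterlim_compose[OF z_ratio iter_ln_inf]) (use ij in simp)
  moreover have "\<And>x. (ln ^^ (j - i)) ((ln ^^ i) x) = (ln ^^ j) (x::real)"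
    using ij by (metis funpow_add le_add_diff_inverse2 less_imp_le o_apply)
  ultimately show ?thesis by simp
qed

lemma comp_all: "f \<in> A n \<Longrightarrow> g \<in> A n \<Longrightarrow> cmp f g"
proof (induction n arbitrary: f g)
  case 0
  then obtain i j where i: "eventually (\<lambda>x. f x = (ln ^^ i) x) at_top"
    and j: "eventually (\<lambda>x. g x = (ln ^^ j) x) at_top" by auto
  consider "i = j" | "i < j" | "j < i" by linarith
  then show ?case
  proof cases
    case 1
    have "eventually (\<lambda>x. f x = g x) at_top" using i j by eventually_elim (simp add: 1)
    then show ?thesis unfolding cmp_def by blast
  next
    case 2
    have "eventually (\<lambda>x. (ln ^^ i) x / (ln ^^ j) x = f x / g x) at_top"
      using i j by eventually_elim simp
    from fl_cong[OF iter_ratio[OF 2] this] show ?thesis unfolding cmp_def by blast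
  next
    case 3
    have "eventually (\<lambda>x. (ln ^^ j) x / (ln ^^ i) x = g x / f x) at_top"
      using i j by eventually_elim simp
    from fl_cong[OF iter_ratio[OF 3] this] show ?thesis unfolding cmp_def by blast
  qed
next
  case (Suc n)
  obtain L1 where L1: "snd ` set L1 \<subseteq> A n" "eventually (\<lambda>x. ln (f x) = lc L1 x) at_top"
    using A_Suc_ln[OF Suc.prems(1)] by blast
  obtain L2 where L2: "snd ` set L2 \<subseteq> A n" "eventually (\<lambda>x. ln (g x) = lc L2 x) at_top"
    using A_Suc_ln[OF Suc.prems(2)] by blast
  define L where "L = L1 @ sc (-1) L2"
  have LT: "snd ` set L \<subseteq> A n" using L1 L2 by (simp add: L_def snd_sc image_Un)
  have fp: "eventually (\<lambda>x. f x > 0) at_top" using A_pos[OF Suc.prems(1)] .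
  have gp: "eventually (\<lambda>x. g x > 0) at_top" using A_pos[OF Suc.prems(2)] .
  have eL: "eventually (\<lambda>x. lc L x = ln (f x) - ln (g x)) at_top"
    using L1(2) L2(2) by eventually_elim (simp add: L_def lc_append lc_sc)
  have inf: "\<forall>h\<in>A n. filterlim h at_top at_top" using A_inf by blast
  have cm: "\<forall>f\<in>A n. \<forall>g\<in>A n. cmp f g" using Suc.IH by blast
  from dom[OF inf cm LT]
  consider "eventually (\<lambda>x. lc L x = 0) at_top" | "filterlim (lc L) at_top at_top"
    | "filterlim (lc L) at_bot at_top" by blast
  then show ?case
  proof cases
    case 1
    have "eventually (\<lambda>x. f x = g x) at_top" using 1 eL fp gp
      by eventually_elim (simp add: ln_inj_iff)
    then show ?thesis unfolding cmp_def by blast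
  next
    case 2
    have "filterlim (\<lambda>x. exp (lc L x)) at_top at_top"
      by (rule filterlim_compose[OF exp_at_top 2])
    moreover have "eventually (\<lambda>x. exp (lc L x) = f x / g x) at_top" using eL fp gp
      by eventually_elim (simp add: exp_diff)
    ultimately have "filterlim (\<lambda>x. f x / g x) at_top at_top" by (rule fl_cong)
    then show ?thesis unfolding cmp_def by blast
  next
    case 3
    have "filterlim (\<lambda>x. - lc L x) at_top at_top"
      using 3 filterlim_uminus_at_bot by blast
    then have "filterlim (\<lambda>x. exp (- lc L x)) at_top at_top"
      by (rule filterlim_compose[OF exp_at_top])
    moreover have "eventually (\<lambda>x. exp (- lc L x) = g x / f x) at_top" using eL fp gp
      by eventually_elim (simp add: exp_diff)
    ultimately have "filterlim (\<lambda>x. g x / f x) at_top at_top" by (rule fl_cong)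
    then show ?thesis unfolding cmp_def by blast
  qed
qed


lemma H_inf: "f \<in> Hset \<Longrightarrow> filterlim f at_top at_top"
  using H_in_A A_inf by blast

lemma H_pos: "f \<in> Hset \<Longrightarrow> eventually (\<lambda>x. f x > 0) at_top"
  using H_inf fl_pos by blast

lemma H_cmp: "f \<in> Hset \<Longrightarrow> g \<in> Hset \<Longrightarrow> cmp f g"
proof -
  assume "f \<in> Hset" "g \<in> Hset"
  then obtain n1 n2 where "f \<in> A n1" "g \<in> A n2" using H_in_A by blast
  then have "f \<in> A (max n1 n2)" "g \<in> A (max n1 n2)"
    using A_mono[of n1 "max n1 n2"] A_mono[of n2 "max n1 n2"] by auto
  then show ?thesis using comp_all by blast
qed

lemma H_sq: "f \<in> Hset \<Longrightarrow> (\<lambda>x. f x * f x) \<in> Hset"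
proof -
  assume f: "f \<in> Hset"
  have "(\<lambda>x. f x powr 2) \<in> Hset" by (rule Hset.power[OF f H_pos[OF f]]) simp
  moreover have "eventually (\<lambda>x. f x powr 2 = f x * f x) at_top"
    using H_pos[OF f] by eventually_elim (simp add: powr_numeral power2_eq_square)
  ultimately show ?thesis by (rule Hset.germ_eq)
qed

lemma H_mult: "f \<in> Hset \<Longrightarrow> g \<in> Hset \<Longrightarrow> (\<lambda>x. f x * g x) \<in> Hset"
proof (cases "eventually (\<lambda>x. f x = g x) at_top")
  case True
  assume f: "f \<in> Hset"
  have "eventually (\<lambda>x. f x * f x = f x * g x) at_top" using True by eventually_elim simp
  then show ?thesis by (rule Hset.germ_eq[OF H_sq[OF f]])
next
  case False
  assume "f \<in> Hset" "g \<in> Hset"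
  then show ?thesis using Hset.times False by blast
qed

lemma P_cong: "q \<in> Pset \<Longrightarrow> eventually (\<lambda>x. q x = p x) at_top \<Longrightarrow> p \<in> Pset"
proof -
  assume q: "q \<in> Pset" and e: "eventually (\<lambda>x. q x = p x) at_top"
  from q consider "q \<in> Hset" | "eventually (\<lambda>x. q x = 1) at_top"
    | f where "f \<in> Hset" "eventually (\<lambda>x. q x = 1 / f x) at_top"
    unfolding Pset_def by blast
  then show ?thesis
  proof cases
    case 1
    then show ?thesis using Hset.germ_eq[OF 1 e] unfolding Pset_def by blast
  next
    case 2
    have "eventually (\<lambda>x. p x = 1) at_top" using 2 e by eventually_elim simp
    then show ?thesis unfolding Pset_def by blast
  next
    case 3
    have "eventually (\<lambda>x. p x = 1 / f x) at_top" using 3(2) e by eventually_elim simp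
    then show ?thesis using 3(1) unfolding Pset_def by blast
  qed
qed

lemma P_H: "f \<in> Hset \<Longrightarrow> f \<in> Pset" unfolding Pset_def by blast
lemma P_one: "(\<lambda>x. 1) \<in> Pset" unfolding Pset_def by simp
lemma P_inv: "f \<in> Hset \<Longrightarrow> (\<lambda>x. 1 / f x) \<in> Pset"
  unfolding Pset_def mem_Collect_eq by (intro disjI2 bexI[of _ f]) auto

lemma H_div: "f \<in> Hset \<Longrightarrow> g \<in> Hset \<Longrightarrow> (\<lambda>x. f x / g x) \<in> Pset"
proof -
  assume f: "f \<in> Hset" and g: "g \<in> Hset"
  from H_cmp[OF f g] consider "eventually (\<lambda>x. f x = g x) at_top"
    | "filterlim (\<lambda>x. f x / g x) at_top at_top" | "filterlim (\<lambda>x. g x / f x) at_top at_top"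
    unfolding cmp_def by blast
  then show ?thesis
  proof cases
    case 1
    have "eventually (\<lambda>x. 1 = f x / g x) at_top" using 1 H_pos[OF g] by eventually_elim simp
    then show ?thesis by (rule P_cong[OF P_one])
  next
    case 2
    then show ?thesis using P_H Hset.quot[OF f g 2] by blast
  next
    case 3
    have h: "(\<lambda>x. g x / f x) \<in> Hset" using Hset.quot[OF g f 3] .
    have "eventually (\<lambda>x. 1 / (g x / f x) = f x / g x) at_top" by simp
    then show ?thesis by (rule P_cong[OF P_inv[OF h]])
  qed
qed

lemma P_cases:
  assumes "p \<in> Pset"
  obtains (H) f where "f \<in> Hset" "eventually (\<lambda>x. p x = f x) at_top"
    | (One) "eventually (\<lambda>x. p x = 1) at_top"
    | (Inv) f where "f \<in> Hset" "eventually (\<lambda>x. p x = 1 / f x) at_top"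
  using assms unfolding Pset_def by auto

theorem mainTheorem4:
  assumes "p \<in> Pset" and "q \<in> Pset"
  shows "(\<lambda>x. p x * q x) \<in> Pset \<and> (\<lambda>x. p x / q x) \<in> Pset"
  using assms(1)
proof (cases rule: P_cases)
  case (H f)
  note pf = H
  from assms(2) show ?thesis
  proof (cases rule: P_cases)
    case (H g)
    have e1: "eventually (\<lambda>x. f x * g x = p x * q x) at_top" using pf(2) H(2) by eventually_elim simp
    have e2: "eventually (\<lambda>x. f x / g x = p x / q x) at_top" using pf(2) H(2) by eventually_elim simp
    show ?thesis using P_cong[OF P_H[OF H_mult[OF pf(1) H(1)]], OF e1] P_cong[OF H_div[OF pf(1) H(1)], OF e2] by blast
  next
    case One
    have e1: "eventually (\<lambda>x. f x = p x * q x) at_top" using pf(2) One by eventually_elim simp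
    have e2: "eventually (\<lambda>x. f x = p x / q x) at_top" using pf(2) One by eventually_elim simp
    show ?thesis using P_cong[OF P_H[OF pf(1)], OF e1] P_cong[OF P_H[OF pf(1)], OF e2] by blast
  next
    case (Inv g)
    have e1: "eventually (\<lambda>x. f x / g x = p x * q x) at_top" using pf(2) Inv(2) by eventually_elim simp
    have e2: "eventually (\<lambda>x. f x * g x = p x / q x) at_top" using pf(2) Inv(2) by eventually_elim simp
    show ?thesis using P_cong[OF P_H[OF H_mult[OF pf(1) Inv(1)]], OF e2] P_cong[OF H_div[OF pf(1) Inv(1)], OF e1] by blast
  qed
next
  case One
  note p1 = One
  from assms(2) show ?thesis
  proof (cases rule: P_cases)
    case (H g)
    have e1: "eventually (\<lambda>x. g x = p x * q x) at_top" using p1 H(2) by eventually_elim simp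
    have e2: "eventually (\<lambda>x. 1 / g x = p x / q x) at_top" using p1 H(2) by eventually_elim simp
    show ?thesis using P_cong[OF P_H[OF H(1)], OF e1] P_cong[OF P_inv[OF H(1)], OF e2] by blast
  next
    case One
    have e1: "eventually (\<lambda>x. 1 = p x * q x) at_top" using p1 One by eventually_elim simp
    have e2: "eventually (\<lambda>x. 1 = p x / q x) at_top" using p1 One by eventually_elim simp
    show ?thesis using P_cong[OF P_one, OF e1] P_cong[OF P_one, OF e2] by blast
  next
    case (Inv g)
    have e1: "eventually (\<lambda>x. 1 / g x = p x * q x) at_top" using p1 Inv(2) by eventually_elim simp
    have e2: "eventually (\<lambda>x. g x = p x / q x) at_top" using p1 Inv(2) by eventually_elim simp
    show ?thesis using P_cong[OF P_H[OF Inv(1)], OF e2] P_cong[OF P_inv[OF Inv(1)], OF e1] by blast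
  qed
next
  case (Inv f)
  note pf = Inv
  from assms(2) show ?thesis
  proof (cases rule: P_cases)
    case (H g)
    have e1: "eventually (\<lambda>x. g x / f x = p x * q x) at_top" using pf(2) H(2) by eventually_elim simp
    have e2: "eventually (\<lambda>x. 1 / (f x * g x) = p x / q x) at_top" using pf(2) H(2) by eventually_elim simp
    show ?thesis using P_cong[OF H_div[OF H(1) pf(1)], OF e1] P_cong[OF P_inv[OF H_mult[OF pf(1) H(1)]], OF e2] by blast
  next
    case One
    have e1: "eventually (\<lambda>x. 1 / f x = p x * q x) at_top" using pf(2) One by eventually_elim simp
    have e2: "eventually (\<lambda>x. 1 / f x = p x / q x) at_top" using pf(2) One by eventually_elim simp
    show ?thesis using P_cong[OF P_inv[OF pf(1)], OF e1] P_cong[OF P_inv[OF pf(1)], OF e2] by blast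
  next
    case (Inv g)
    have e1: "eventually (\<lambda>x. 1 / (f x * g x) = p x * q x) at_top" using pf(2) Inv(2) by eventually_elim simp
    have e2: "eventually (\<lambda>x. g x / f x = p x / q x) at_top" using pf(2) Inv(2) by eventually_elim simp
    show ?thesis using P_cong[OF P_inv[OF H_mult[OF pf(1) Inv(1)]], OF e1] P_cong[OF H_div[OF Inv(1) pf(1)], OF e2] by blast
  qed
qed

end
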